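(* Let $g\in\mathbb{Z}^+$, $\ell\in\mathbb{Z}_{\ge0}$, $\vec i\le\vec j$ in $\mathbb{Z}^d$ and $k\in\{1,\dots,\lfloor\ell/g\rfloor\}$. Then (i) $\mathcal{O}^k\big(\mathcal{B}^\ell[\vec i:\vec j],-g,\mathfrak{B}\big)=\mathcal{B}^{\ell-gk}\big[L^k(\vec i):R^k(\vec j)\big]$, where $L(\vec i)=D_0^g(\vec i)-p$ and $R(\vec i)=D_0^g(\vec i+p)$; (ii) for every $\varphi\in\mathfrak{B}$ with $\ell_\varphi=\ell$, $\mathcal{O}^k(\varphi,-g,\mathfrak{B})\subset\{\psi\in\mathfrak{B}:\ell_\psi=\ell-gk,\ \|\rho(\varphi,\psi)\|_\infty\le C\}$ with $C=p\,n^g\frac{1-n^{-kg}}{n^g-1}+1\le\frac{pn^g}{n^g-1}+1$; (iii) $\#\mathcal{O}^k(\varphi,-g,\mathfrak{B})\le(2C+1)^d$.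
   Context: Fix integers $d\ge1$, $n\ge2$, $m\ge2$; $s=n-1$, $p=m-1$. Vector inequalities/floors componentwise; $[\vec i:\vec j]=\{\vec k\in\mathbb{Z}^d:\vec i\le\vec k\le\vec j\}$. $D_c(\vec i)=\lfloor(\vec i-c)/n\rfloor$ and $D_c^k$ its $k$-fold iterate. B-splines: $Q$ is the uniform B-spline of order $m$ with knots $0,\dots,m$, $\varphi^\ell_{\vec i}(\vec x)=\prod_kQ(n^\ell x_k-i_k)$ ($\ell\ge0$, $\vec i\in\mathbb{Z}^d$), $\mathfrak{B}$ the set of all of them, $\ell_\varphi,\vec i_\varphi$ level and index, $\mathcal{B}^\ell[\vec i:\vec j]=\{\varphi^\ell_{\vec k}:\vec k\in[\vec i:\vec j]\}$. Cells: $I^\ell_{\vec i}=\prod_k[i_kn^{-\ell},(i_k+1)n^{-\ell})$, $\mathcal{I}^\ell[\vec i:\vec j]$ the corresponding box of cells; cell children $\mathrm{ch}(I^\ell_{\vec i})=\mathcal{I}^{\ell+1}[n\vec i:n\vec i+s]$, $\mathrm{ch}^k$ the $k$-fold application, $\mathrm{ch}^{-k}(I)=\{J:I\in\mathrm{ch}^k(J)\}$ (unions over sets). Cell support $\mathbb{I}(\varphi^\ell_{\vec i})=\mathcal{I}^\ell[\vec i:\vec i+p]$, $\mathbb{I}^k(\varphi)=\mathrm{ch}^k(\mathbb{I}(\varphi))$ for $k\in\mathbb{Z}$; $\mathbb{B}^k(I)=\{\varphi\in\mathfrak{B}:I\in\mathbb{I}^{-k}(\varphi)\}$; all extended to sets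 by union. For $\mathcal{F},\mathcal{H}\subset\mathfrak{B}$, $j\in\mathbb{Z}$: $\mathcal{O}(\mathcal{F},j,\mathcal{H})=\mathbb{B}^j(\mathbb{I}(\mathcal{F}))\cap\mathcal{H}$, $\mathcal{O}(\varphi,j,\mathcal{H})=\mathcal{O}(\{\varphi\},j,\mathcal{H})$, and $\mathcal{O}^{k+1}(\mathcal{F},j,\mathcal{H})=\mathcal{O}(\mathcal{O}^k(\mathcal{F},j,\mathcal{H}),j,\mathcal{H})$. $\rho(\varphi_1,\varphi_2)=\vec i_{\varphi_1}n^{-(\ell_{\varphi_1}-\ell_{\varphi_2})}-\vec i_{\varphi_2}$, and $\|\cdot\|_\infty$ is the max of absolute values of components. *)

theory Defs
  imports "HOL-Analysis.Analysis"
begin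

text \<open>Integer vectors in Z^d are int^'d (d = CARD('d) >= 1); the order on int^'d
is the library's componentwise order.  A B-spline phi^l_i and a cell I^l_i are
both represented by their (level, index) pair.  The parameters n, m of the paper
are explicit arguments; p = m - 1, s = n - 1.\<close>

type_synonym 'd bspl = "nat \<times> (int^'d)"
type_synonym 'd cell = "nat \<times> (int^'d)"

definition cvec :: "int \<Rightarrow> int^'d" where "cvec c = (\<chi> t. c)"

definition box :: "int^'d \<Rightarrow> int^'d \<Rightarrow> (int^'d) set" where
  "box i j = {k. i \<le> k \<and> k \<le> j}"

definition Dfl :: "nat \<Rightarrow> int \<Rightarrow> int^'d \<Rightarrow> int^'d" where
  "Dfl n c i = (\<chi> t. \<lfloor>(real_of_int (i$t) - real_of_int c) / real n\<rfloor>)"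

definition allB :: "('d::finite) bspl set" where "allB = UNIV"

definition Bbox :: "nat \<Rightarrow> int^'d \<Rightarrow> int^'d \<Rightarrow> ('d::finite) bspl set" where
  "Bbox l i j = {(l, k) | k. k \<in> box i j}"

definition ch :: "nat \<Rightarrow> ('d::finite) cell \<Rightarrow> ('d::finite) cell set" where
  "ch n I = {(fst I + 1, k) | k. k \<in> box (\<chi> t. int n * (snd I $ t)) (\<chi> t. int n * (snd I $ t) + (int n - 1))}"

definition chS :: "nat \<Rightarrow> ('d::finite) cell set \<Rightarrow> ('d::finite) cell set" where
  "chS n S = (\<Union>I\<in>S. ch n I)"

definition chpow :: "nat \<Rightarrow> nat \<Rightarrow> ('d::finite) cell set \<Rightarrow> ('d::finite) cell set" where
  "chpow n k S = (chS n ^^ k) S"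

definition chneg :: "nat \<Rightarrow> nat \<Rightarrow> ('d::finite) cell set \<Rightarrow> ('d::finite) cell set" where
  "chneg n k S = {J. \<exists>I\<in>S. I \<in> chpow n k {J}}"

definition supp :: "nat \<Rightarrow> ('d::finite) bspl \<Rightarrow> ('d::finite) cell set" where
  "supp m phi = {(fst phi, k) | k. k \<in> box (snd phi) (snd phi + cvec (int m - 1))}"

definition suppk :: "nat \<Rightarrow> nat \<Rightarrow> int \<Rightarrow> ('d::finite) bspl \<Rightarrow> ('d::finite) cell set" where
  "suppk n m k phi = (if 0 \<le> k then chpow n (nat k) (supp m phi) else chneg n (nat (- k)) (supp m phi))"

definition suppS :: "nat \<Rightarrow> ('d::finite) bspl set \<Rightarrow> ('d::finite) cell set" where
  "suppS m F = (\<Union>phi\<in>F. supp m phi)"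

definition BBk :: "nat \<Rightarrow> nat \<Rightarrow> int \<Rightarrow> ('d::finite) cell set \<Rightarrow> ('d::finite) bspl set" where
  "BBk n m k S = {phi \<in> allB. \<exists>I\<in>S. I \<in> suppk n m (- k) phi}"

definition Onb :: "nat \<Rightarrow> nat \<Rightarrow> ('d::finite) bspl set \<Rightarrow> int \<Rightarrow> ('d::finite) bspl set \<Rightarrow> ('d::finite) bspl set" where
  "Onb n m F j H = BBk n m j (suppS m F) \<inter> H"

definition Opow :: "nat \<Rightarrow> nat \<Rightarrow> nat \<Rightarrow> ('d::finite) bspl set \<Rightarrow> int \<Rightarrow> ('d::finite) bspl set \<Rightarrow> ('d::finite) bspl set" where
  "Opow n m k F j H = ((\<lambda>X. Onb n m X j H) ^^ k) F"

definition rho :: "nat \<Rightarrow> ('d::finite) bspl \<Rightarrow> ('d::finite) bspl \<Rightarrow> real^'d" where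
  "rho n phi1 phi2 = (\<chi> t. real_of_int (snd phi1 $ t) * real n powi (- (int (fst phi1) - int (fst phi2)))
                          - real_of_int (snd phi2 $ t))"

end

theory Submission imports Defs "HOL-Library.FuncSet" begin

lemma div_iff_bounds:
  fixes x c N :: int assumes "0 < N"
  shows "x div N = c \<longleftrightarrow> N*c \<le> x \<and> x \<le> N*c + N - 1"
proof
  assume "x div N = c"
  then show "N*c \<le> x \<and> x \<le> N*c + N - 1"
    using assms by (smt (verit) div_mod_decomp_int pos_mod_bound pos_mod_sign mult.commute)
next
  assume h: "N*c \<le> x \<and> x \<le> N*c + N - 1"
  then have "x = N*c + (x - N*c)" by simp
  then show "x div N = c" using h assms
    by (smt (verit, best) div_pos_pos_trivial div_mult_self3 mult.commute)
qed

lemma ch_mem: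
  assumes "n > 0"
  shows "(l2, b') \<in> ch n (l, b) \<longleftrightarrow> l2 = l + 1 \<and> (\<forall>t. b' $ t div int n = b $ t)"
  using assms by (auto simp: ch_def box_def less_eq_vec_def div_iff_bounds) (smt (verit))+

lemma chpow_mem:
  assumes "n > 0"
  shows "I \<in> chpow n g S \<longleftrightarrow> (\<exists>c\<in>S. fst I = fst c + g \<and> (\<forall>t. snd I $ t div (int n ^ g) = snd c $ t))"
proof (induction g arbitrary: I)
  case 0
  have "I \<in> S \<longleftrightarrow> (\<exists>c\<in>S. fst I = fst c \<and> (\<forall>t. snd I $ t = snd c $ t))"
  proof
    assume "\<exists>c\<in>S. fst I = fst c \<and> (\<forall>t. snd I $ t = snd c $ t)"
    then obtain c where "c \<in> S" "fst I = fst c" "snd I = snd c" by (auto simp: vec_eq_iff)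
    then show "I \<in> S" by (metis prod.collapse)
  qed auto
  then show ?case by (simp add: chpow_def)
next
  case (Suc g)
  have pw: "\<And>x. x div (int n ^ Suc g) = (x div int n) div (int n ^ g)"
    "\<And>x. x div (int n * int n ^ g) = (x div int n) div (int n ^ g)"
    by (simp_all add: zdiv_zmult2_eq)
  have "I \<in> chpow n (Suc g) S \<longleftrightarrow> (\<exists>J\<in>chpow n g S. I \<in> ch n J)"
    by (simp add: chpow_def chS_def)
  also have "\<dots> \<longleftrightarrow> (\<exists>c\<in>S. fst I = fst c + Suc g \<and> (\<forall>t. snd I $ t div (int n ^ Suc g) = snd c $ t))"
  proof
    assume "\<exists>J\<in>chpow n g S. I \<in> ch n J"
    then obtain J where J: "J \<in> chpow n g S" "I \<in> ch n J" by blast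
    obtain c where c: "c \<in> S" "fst J = fst c + g" "\<forall>t. snd J $ t div (int n ^ g) = snd c $ t"
      using J(1) Suc by blast
    have "fst I = fst J + 1 \<and> (\<forall>t. snd I $ t div int n = snd J $ t)"
      using J(2) ch_mem[OF assms, of "fst I" "snd I" "fst J" "snd J"] by simp
    then show "\<exists>c\<in>S. fst I = fst c + Suc g \<and> (\<forall>t. snd I $ t div (int n ^ Suc g) = snd c $ t)"
      using c by (auto simp: pw)
  next
    assume "\<exists>c\<in>S. fst I = fst c + Suc g \<and> (\<forall>t. snd I $ t div (int n ^ Suc g) = snd c $ t)"
    then obtain c where c: "c \<in> S" "fst I = fst c + Suc g" "\<forall>t. snd I $ t div (int n ^ Suc g) = snd c $ t"
      by blast
    define J where "J = (fst c + g, \<chi> t. snd I $ t div int n)"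
    have "J \<in> chpow n g S" using Suc[of J] c by (auto simp: J_def pw)
    moreover have "I \<in> ch n J"
      using ch_mem[OF assms, of "fst I" "snd I" "fst J" "snd J"] c by (simp add: J_def) (metis prod.collapse)
    ultimately show "\<exists>J\<in>chpow n g S. I \<in> ch n J" by blast
  qed
  finally show ?case .
qed

lemma supp_mem: "I \<in> supp m phi \<longleftrightarrow> fst I = fst phi \<and> (\<forall>t. snd phi $ t \<le> snd I $ t \<and> snd I $ t \<le> snd phi $ t + (int m - 1))"
  by (cases I) (auto simp: supp_def box_def less_eq_vec_def cvec_def)

lemma suppS_Bbox:
  assumes "lo \<le> hi" "m \<ge> 1"
  shows "I \<in> suppS m (Bbox l lo hi) \<longleftrightarrow> fst I = l \<and> (\<forall>t. lo $ t \<le> snd I $ t \<and> snd I $ t \<le> hi $ t + (int m - 1))"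
proof
  assume "I \<in> suppS m (Bbox l lo hi)"
  then obtain k where k: "k \<in> box lo hi" "I \<in> supp m (l, k)"
    by (auto simp: suppS_def Bbox_def)
  then show "fst I = l \<and> (\<forall>t. lo $ t \<le> snd I $ t \<and> snd I $ t \<le> hi $ t + (int m - 1))"
    by (auto simp: supp_mem box_def less_eq_vec_def) (smt (verit))+ 
next
  assume h: "fst I = l \<and> (\<forall>t. lo $ t \<le> snd I $ t \<and> snd I $ t \<le> hi $ t + (int m - 1))"
  define k where "k = (\<chi> t. max (lo $ t) (snd I $ t - (int m - 1)))"
  have "k \<in> box lo hi" using h assms by (auto simp: k_def box_def less_eq_vec_def) (smt (verit))
  moreover have "I \<in> supp m (l, k)" using h assms by (auto simp: k_def supp_mem)
  ultimately show "I \<in> suppS m (Bbox l lo hi)" by (auto simp: suppS_def Bbox_def)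
qed

lemma chpow_supp_mem:
  assumes "n > 0"
  shows "I \<in> chpow n g (supp m phi) \<longleftrightarrow> fst I = fst phi + g \<and>
     (\<forall>t. snd phi $ t \<le> snd I $ t div (int n ^ g) \<and> snd I $ t div (int n ^ g) \<le> snd phi $ t + (int m - 1))"
proof -
  have "I \<in> chpow n g (supp m phi) \<longleftrightarrow> (\<exists>c\<in>supp m phi. fst I = fst c + g \<and> (\<forall>t. snd I $ t div (int n ^ g) = snd c $ t))"
    by (rule chpow_mem[OF assms])
  also have "\<dots> \<longleftrightarrow> fst I = fst phi + g \<and>
     (\<forall>t. snd phi $ t \<le> snd I $ t div (int n ^ g) \<and> snd I $ t div (int n ^ g) \<le> snd phi $ t + (int m - 1))"
  proof
    assume "\<exists>c\<in>supp m phi. fst I = fst c + g \<and> (\<forall>t. snd I $ t div (int n ^ g) = snd c $ t)"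
    then show "fst I = fst phi + g \<and>
     (\<forall>t. snd phi $ t \<le> snd I $ t div (int n ^ g) \<and> snd I $ t div (int n ^ g) \<le> snd phi $ t + (int m - 1))"
      by (auto simp: supp_mem)
  next
    assume h: "fst I = fst phi + g \<and>
     (\<forall>t. snd phi $ t \<le> snd I $ t div (int n ^ g) \<and> snd I $ t div (int n ^ g) \<le> snd phi $ t + (int m - 1))"
    define c where "c = (fst phi, \<chi> t. snd I $ t div (int n ^ g))"
    have "c \<in> supp m phi" using h by (simp add: c_def supp_mem)
    then show "\<exists>c\<in>supp m phi. fst I = fst c + g \<and> (\<forall>t. snd I $ t div (int n ^ g) = snd c $ t)"
      using h by (intro bexI[of _ c]) (auto simp: c_def)
  qed
  finally show ?thesis .
qed

lemma vec_choice: "(\<exists>x::'a^'d. \<forall>t. P t (x $ t)) \<longleftrightarrow> (\<forall>t. \<exists>y. P t y)"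
proof
  assume "\<forall>t. \<exists>y. P t y"
  then obtain f where "\<forall>t. P t (f t)" by metis
  then show "\<exists>x::'a^'d. \<forall>t. P t (x $ t)" by (intro exI[of _ "\<chi> t. f t"]) simp
qed auto

lemma one_dim:
  fixes lo hi a p N :: int
  assumes "0 < N" "lo \<le> hi" "0 \<le> p"
  shows "(\<exists>x. lo \<le> x \<and> x \<le> hi + p \<and> a \<le> x div N \<and> x div N \<le> a + p) \<longleftrightarrow>
         lo div N - p \<le> a \<and> a \<le> (hi + p) div N"
proof
  assume "\<exists>x. lo \<le> x \<and> x \<le> hi + p \<and> a \<le> x div N \<and> x div N \<le> a + p"
  then obtain x where x: "lo \<le> x" "x \<le> hi + p" "a \<le> x div N" "x div N \<le> a + p" by blast
  have "lo div N \<le> x div N" using x(1) assms(1) by (simp add: zdiv_mono1)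
  moreover have "x div N \<le> (hi + p) div N" using x(2) assms(1) by (simp add: zdiv_mono1)
  ultimately show "lo div N - p \<le> a \<and> a \<le> (hi + p) div N" using x by linarith
next
  assume h: "lo div N - p \<le> a \<and> a \<le> (hi + p) div N"
  show "\<exists>x. lo \<le> x \<and> x \<le> hi + p \<and> a \<le> x div N \<and> x div N \<le> a + p"
  proof (cases "N * a \<ge> lo")
    case True
    have "N * a \<le> N * ((hi + p) div N)" using h assms(1) by simp
    also have "\<dots> \<le> hi + p" using assms(1) div_mult_mod_eq[of "hi+p" N] pos_mod_sign[of N "hi+p"]
        mult.commute[of N "(hi+p) div N"] by linarith
    finally have "N * a \<le> hi + p" .
    moreover have "(N * a) div N = a" using assms(1) by simp
    ultimately show ?thesis using True assms by (intro exI[of _ "N * a"]) auto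
  next
    case False
    have "(N * a) div N \<le> lo div N" using False assms(1) by (intro zdiv_mono1) auto
    then have "a \<le> lo div N" using assms(1) by simp
    then show ?thesis using h assms by (intro exI[of _ lo]) auto
  qed
qed

lemma Bbox_mem: "(l', a) \<in> Bbox l lo hi \<longleftrightarrow> l' = l \<and> (\<forall>t. lo $ t \<le> a $ t \<and> a $ t \<le> hi $ t)"
  by (auto simp: Bbox_def box_def less_eq_vec_def)

lemma Onb_mem:
  assumes "n > 0" "m \<ge> 1" "lo \<le> hi"
  shows "(l', a) \<in> Onb n m (Bbox l lo hi) (- int g) allB \<longleftrightarrow> l = l' + g \<and>
     (\<forall>t. lo $ t div (int n ^ g) - (int m - 1) \<le> a $ t \<and> a $ t \<le> (hi $ t + (int m - 1)) div (int n ^ g))"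
proof -
  let ?N = "int n ^ g" and ?p = "int m - 1"
  have N: "0 < ?N" using assms by simp
  have p: "0 \<le> ?p" using assms by simp
  have lohi: "\<forall>t. lo $ t \<le> hi $ t" using assms(3) by (simp add: less_eq_vec_def)
  have "(l', a) \<in> Onb n m (Bbox l lo hi) (- int g) allB \<longleftrightarrow>
        (\<exists>I. I \<in> suppS m (Bbox l lo hi) \<and> I \<in> chpow n g (supp m (l', a)))"
    by (auto simp: Onb_def BBk_def suppk_def allB_def)
  also have "\<dots> \<longleftrightarrow> (\<exists>I. fst I = l \<and> fst I = l' + g \<and> (\<forall>t. (lo $ t \<le> snd I $ t \<and> snd I $ t \<le> hi $ t + ?p) \<and>
       (a $ t \<le> snd I $ t div ?N \<and> snd I $ t div ?N \<le> a $ t + ?p)))"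
    by (simp add: suppS_Bbox[OF assms(3,2)] chpow_supp_mem[OF assms(1)]) blast
  also have "\<dots> \<longleftrightarrow> l = l' + g \<and> (\<exists>x::int^'a. \<forall>t. (lo $ t \<le> x $ t \<and> x $ t \<le> hi $ t + ?p) \<and>
       (a $ t \<le> x $ t div ?N \<and> x $ t div ?N \<le> a $ t + ?p))"
  proof
    assume "\<exists>I. fst I = l \<and> fst I = l' + g \<and> (\<forall>t. (lo $ t \<le> snd I $ t \<and> snd I $ t \<le> hi $ t + ?p) \<and>
       (a $ t \<le> snd I $ t div ?N \<and> snd I $ t div ?N \<le> a $ t + ?p))"
    then show "l = l' + g \<and> (\<exists>x::int^'a. \<forall>t. (lo $ t \<le> x $ t \<and> x $ t \<le> hi $ t + ?p) \<and>
       (a $ t \<le> x $ t div ?N \<and> x $ t div ?N \<le> a $ t + ?p))" by blast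
  next
    assume "l = l' + g \<and> (\<exists>x::int^'a. \<forall>t. (lo $ t \<le> x $ t \<and> x $ t \<le> hi $ t + ?p) \<and>
       (a $ t \<le> x $ t div ?N \<and> x $ t div ?N \<le> a $ t + ?p))"
    then obtain x :: "int^'a" where "l = l' + g" "\<forall>t. (lo $ t \<le> x $ t \<and> x $ t \<le> hi $ t + ?p) \<and>
       (a $ t \<le> x $ t div ?N \<and> x $ t div ?N \<le> a $ t + ?p)" by blast
    then show "\<exists>I. fst I = l \<and> fst I = l' + g \<and> (\<forall>t. (lo $ t \<le> snd I $ t \<and> snd I $ t \<le> hi $ t + ?p) \<and>
       (a $ t \<le> snd I $ t div ?N \<and> snd I $ t div ?N \<le> a $ t + ?p))"
      by (intro exI[of _ "(l, x)"]) simp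
  qed
  also have "\<dots> \<longleftrightarrow> l = l' + g \<and> (\<forall>t. \<exists>y. (lo $ t \<le> y \<and> y \<le> hi $ t + ?p) \<and>
       (a $ t \<le> y div ?N \<and> y div ?N \<le> a $ t + ?p))"
    using vec_choice[where P="\<lambda>t y. (lo $ t \<le> y \<and> y \<le> hi $ t + ?p) \<and> (a $ t \<le> y div ?N \<and> y div ?N \<le> a $ t + ?p)"]
    by simp
  also have "\<dots> \<longleftrightarrow> l = l' + g \<and> (\<forall>t. lo $ t div ?N - ?p \<le> a $ t \<and> a $ t \<le> (hi $ t + ?p) div ?N)"
    using one_dim[OF N _ p] lohi by simp
  finally show ?thesis .
qed

lemma Onb_Bbox:
  assumes "n > 0" "m \<ge> 1" "lo \<le> hi" "g \<le> l"
  shows "Onb n m (Bbox l lo hi) (- int g) allB = Bbox (l - g) (\<chi> t. lo $ t div (int n ^ g) - (int m - 1)) (\<chi> t. (hi $ t + (int m - 1)) div (int n ^ g))"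
proof (rule set_eqI)
  fix phi :: "nat \<times> (int^'a)"
  obtain l' a where phi: "phi = (l', a)" by (cases phi)
  show "phi \<in> Onb n m (Bbox l lo hi) (- int g) allB \<longleftrightarrow> phi \<in> Bbox (l - g) (\<chi> t. lo $ t div (int n ^ g) - (int m - 1)) (\<chi> t. (hi $ t + (int m - 1)) div (int n ^ g))"
    unfolding phi Onb_mem[OF assms(1-3)] Bbox_mem using assms(4) by auto
qed

definition LV :: "int \<Rightarrow> int \<Rightarrow> int^'d \<Rightarrow> int^'d" where
  "LV N p x = (\<chi> t. x $ t div N - p)"
definition RV :: "int \<Rightarrow> int \<Rightarrow> int^'d \<Rightarrow> int^'d" where
  "RV N p x = (\<chi> t. (x $ t + p) div N)"

lemma LV_le_RV:
  assumes "0 < N" "0 \<le> p" "x \<le> y"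
  shows "LV N p x \<le> RV N p y"
proof -
  have "\<And>t. x $ t div N - p \<le> (y $ t + p) div N"
  proof -
    fix t
    have "x $ t \<le> y $ t" using assms(3) by (simp add: less_eq_vec_def)
    then have "x $ t div N \<le> (y $ t + p) div N"
      using assms by (intro zdiv_mono1) auto
    then show "x $ t div N - p \<le> (y $ t + p) div N" using assms by simp
  qed
  then show ?thesis by (simp add: LV_def RV_def less_eq_vec_def)
qed

lemma Opow_Suc: "Opow n m (Suc k) F j H = Onb n m (Opow n m k F j H) j H"
  by (simp add: Opow_def)

lemma Opow_Bbox:
  assumes "n > 0" "m \<ge> 1" "lo \<le> hi" "g * k \<le> l"
  shows "Opow n m k (Bbox l lo hi) (- int g) allB = Bbox (l - g * k) ((LV (int n ^ g) (int m - 1) ^^ k) lo) ((RV (int n ^ g) (int m - 1) ^^ k) hi)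
     \<and> (LV (int n ^ g) (int m - 1) ^^ k) lo \<le> (RV (int n ^ g) (int m - 1) ^^ k) hi"
  using assms(4)
proof (induction k)
  case 0
  then show ?case using assms by (simp add: Opow_def)
next
  case (Suc k)
  let ?L = "(LV (int n ^ g) (int m - 1) ^^ k) lo" and ?R = "(RV (int n ^ g) (int m - 1) ^^ k) hi"
  have IH: "Opow n m k (Bbox l lo hi) (- int g) allB = Bbox (l - g * k) ?L ?R" "?L \<le> ?R"
    using Suc by auto
  have gl: "g \<le> l - g * k" using Suc.prems by simp
  have e: "l - g * k - g = l - g * Suc k" by (simp add: algebra_simps)
  have "Opow n m (Suc k) (Bbox l lo hi) (- int g) allB = Onb n m (Bbox (l - g * k) ?L ?R) (- int g) allB"
    by (simp add: Opow_Suc IH)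
  also have "\<dots> = Bbox (l - g * Suc k) (LV (int n ^ g) (int m - 1) ?L) (RV (int n ^ g) (int m - 1) ?R)"
    using Onb_Bbox[OF assms(1,2) IH(2) gl] e by (simp add: LV_def RV_def)
  finally show ?case using LV_le_RV[OF _ _ IH(2), of "int n ^ g" "int m - 1"] assms by simp
qed

lemma Dfl_pow:
  assumes "n > 0"
  shows "(Dfl n 0 ^^ g) x = (\<chi> t. x $ t div (int n ^ g))"
proof (induction g)
  case 0
  then show ?case by (simp add: vec_eq_iff)
next
  case (Suc g)
  have cm: "\<And>z. z div int n ^ g div int n = z div int n div int n ^ g"
    by (simp add: zdiv_zmult2_eq[symmetric] mult.commute)
  have "\<And>y. real n = real_of_int (int n)" by simp
  then show ?case using Suc cm
    by (simp add: Dfl_def vec_eq_iff floor_divide_of_int_eq[of _ "int n", simplified] zdiv_zmult2_eq mult.commute)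
qed

lemma LV_pow_comp: "(LV N p ^^ k) x $ t = ((\<lambda>y. y div N - p) ^^ k) (x $ t)"
  by (induction k) (simp_all add: LV_def)

lemma RV_pow_comp: "(RV N p ^^ k) x $ t = ((\<lambda>y. (y + p) div N) ^^ k) (x $ t)"
  by (induction k) (simp_all add: RV_def)

lemma div_lower_real:
  fixes y N :: int assumes "0 < N"
  shows "real_of_int (y div N) \<ge> (real_of_int y - real_of_int N + 1) / real_of_int N"
proof -
  have "y = N * (y div N) + y mod N" by simp
  moreover have "y mod N \<le> N - 1" using assms by (smt (verit) pos_mod_bound)
  ultimately have "y - N + 1 \<le> N * (y div N)" by linarith
  then have "real_of_int y - real_of_int N + 1 \<le> real_of_int N * real_of_int (y div N)"
    by (metis of_int_add of_int_diff of_int_le_iff of_int_mult of_int_1)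
  then show ?thesis using assms by (simp add: divide_le_eq mult.commute)
qed

lemma div_upper_real:
  fixes y N :: int assumes "0 < N"
  shows "real_of_int (y div N) \<le> real_of_int y / real_of_int N"
proof -
  have "y = N * (y div N) + y mod N" by simp
  moreover have "0 \<le> y mod N" using assms by simp
  ultimately have "N * (y div N) \<le> y" by linarith
  then have "real_of_int N * real_of_int (y div N) \<le> real_of_int y"
    by (metis of_int_le_iff of_int_mult)
  then show ?thesis using assms by (simp add: le_divide_eq mult.commute)
qed

lemma alg1:
  fixes p Nr q :: real assumes "Nr > 1"
  shows "(p*Nr*(1-q)/(Nr-1) + 1 - q + Nr - 1)/Nr + p = p*Nr*(1-q/Nr)/(Nr-1) + 1 - q/Nr"
  using assms by (simp add: field_simps)

lemma alg2:
  fixes p Nr q :: real assumes "Nr > 1"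
  shows "(p*(1-q)/(Nr-1) + p)/Nr = p*(1-q/Nr)/(Nr-1)"
  using assms by (simp add: field_simps)

lemma L_lower:
  fixes N p a :: int assumes "1 < N"
  shows "real_of_int (((\<lambda>y. y div N - p) ^^ k) a) \<ge> real_of_int a / real_of_int N ^ k
     - (real_of_int p * real_of_int N * (1 - 1 / real_of_int N ^ k) / (real_of_int N - 1) + 1 - 1 / real_of_int N ^ k)"
proof (induction k)
  case 0
  then show ?case by simp
next
  case (Suc k)
  define Nr where "Nr = real_of_int N"
  define q where "q = 1 / Nr ^ k"
  define y where "y = ((\<lambda>y. y div N - p) ^^ k) a"
  have Nr: "Nr > 1" using assms by (simp add: Nr_def)
  have IH: "real_of_int y \<ge> real_of_int a * q - (real_of_int p * Nr * (1 - q) / (Nr - 1) + 1 - q)"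
    using Suc by (simp add: Nr_def q_def y_def)
  have "real_of_int (y div N - p) \<ge> (real_of_int y - Nr + 1) / Nr - real_of_int p"
    using div_lower_real[of N y] assms by (simp add: Nr_def)
  moreover have "(real_of_int y - Nr + 1) / Nr \<ge> (real_of_int a * q - (real_of_int p * Nr * (1 - q) / (Nr - 1) + 1 - q) - Nr + 1) / Nr"
    using IH Nr by (intro divide_right_mono) auto
  moreover have "(real_of_int a * q - (real_of_int p * Nr * (1 - q) / (Nr - 1) + 1 - q) - Nr + 1) / Nr - real_of_int p
     = real_of_int a * (q / Nr) - ((real_of_int p * Nr * (1 - q) / (Nr - 1) + 1 - q + Nr - 1) / Nr + real_of_int p)"
    using Nr by (simp add: field_simps)
  ultimately have "real_of_int (y div N - p) \<ge> real_of_int a * (q / Nr) - (real_of_int p * Nr * (1 - q / Nr) / (Nr - 1) + 1 - q / Nr)"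
    using alg1[OF Nr, of "real_of_int p" q] by linarith
  moreover have e2: "q / Nr = 1 / Nr ^ Suc k" by (simp add: q_def)
  moreover have e1: "real_of_int a * (1 / Nr ^ Suc k) = real_of_int a / Nr ^ Suc k" by simp
  ultimately have "real_of_int (y div N - p) \<ge> real_of_int a / Nr ^ Suc k - (real_of_int p * Nr * (1 - 1 / Nr ^ Suc k) / (Nr - 1) + 1 - 1 / Nr ^ Suc k)"
    by (simp only: e2 e1)
  then show ?case by (simp add: y_def Nr_def)
qed

lemma R_upper:
  fixes N p a :: int assumes "1 < N"
  shows "real_of_int (((\<lambda>y. (y + p) div N) ^^ k) a) \<le> real_of_int a / real_of_int N ^ k
     + real_of_int p * (1 - 1 / real_of_int N ^ k) / (real_of_int N - 1)"
proof (induction k)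
  case 0
  then show ?case by simp
next
  case (Suc k)
  define Nr where "Nr = real_of_int N"
  define q where "q = 1 / Nr ^ k"
  define y where "y = ((\<lambda>y. (y + p) div N) ^^ k) a"
  have Nr: "Nr > 1" using assms by (simp add: Nr_def)
  have IH: "real_of_int y \<le> real_of_int a * q + real_of_int p * (1 - q) / (Nr - 1)"
    using Suc by (simp add: Nr_def q_def y_def)
  have "real_of_int ((y + p) div N) \<le> (real_of_int y + real_of_int p) / Nr"
    using div_upper_real[of N "y + p"] assms by (simp add: Nr_def)
  moreover have "(real_of_int y + real_of_int p) / Nr \<le> (real_of_int a * q + real_of_int p * (1 - q) / (Nr - 1) + real_of_int p) / Nr"
    using IH Nr by (intro divide_right_mono) auto
  moreover have "(real_of_int a * q + real_of_int p * (1 - q) / (Nr - 1) + real_of_int p) / Nr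
     = real_of_int a * (q / Nr) + (real_of_int p * (1 - q) / (Nr - 1) + real_of_int p) / Nr"
    using Nr by (simp add: field_simps)
  ultimately have "real_of_int ((y + p) div N) \<le> real_of_int a * (q / Nr) + real_of_int p * (1 - q / Nr) / (Nr - 1)"
    using alg2[OF Nr, of "real_of_int p" q] by linarith
  moreover have e2: "q / Nr = 1 / Nr ^ Suc k" by (simp add: q_def)
  moreover have e1: "real_of_int a * (1 / Nr ^ Suc k) = real_of_int a / Nr ^ Suc k" by simp
  ultimately have "real_of_int ((y + p) div N) \<le> real_of_int a / Nr ^ Suc k + real_of_int p * (1 - 1 / Nr ^ Suc k) / (Nr - 1)"
    by (simp only: e2 e1)
  then show ?case by (simp add: y_def Nr_def)
qed

lemma box_bij: "bij_betw vec_nth (box lo hi) (PiE UNIV (\<lambda>t. {lo $ t..hi $ t}))"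
proof (rule bij_betwI[where g = vec_lambda])
  show "vec_nth \<in> box lo hi \<rightarrow> PiE UNIV (\<lambda>t. {lo $ t..hi $ t})"
    by (auto simp: box_def less_eq_vec_def PiE_UNIV_domain)
  show "vec_lambda \<in> PiE UNIV (\<lambda>t. {lo $ t..hi $ t}) \<rightarrow> box lo hi"
    by (auto simp: box_def less_eq_vec_def PiE_UNIV_domain Pi_iff)
qed auto

lemma card_Bbox:
  fixes lo hi :: "int^'d"
  shows "finite (Bbox l lo hi) \<and> card (Bbox l lo hi) = (\<Prod>t\<in>UNIV. nat (hi $ t - lo $ t + 1))"
proof -
  have eq: "Bbox l lo hi = (\<lambda>k. (l, k)) ` box lo hi" by (auto simp: Bbox_def)
  have inj: "inj (\<lambda>k::int^'d. (l, k))" by (auto simp: inj_def)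
  have fP: "finite (PiE UNIV (\<lambda>t::'d. {lo $ t..hi $ t}))" by (intro finite_PiE) auto
  have fb: "finite (box lo hi)" using bij_betw_finite[OF box_bij] fP by blast
  have "card (box lo hi) = card (PiE UNIV (\<lambda>t::'d. {lo $ t..hi $ t}))"
    using bij_betw_same_card[OF box_bij] by blast
  also have "\<dots> = (\<Prod>t\<in>UNIV. nat (hi $ t - lo $ t + 1))" by (simp add: card_PiE)
  finally show ?thesis using eq fb inj by (simp add: card_image inj_on_def)
qed

lemma infnorm_le_cart:
  fixes x :: "real^'d"
  assumes "\<And>t. \<bar>x $ t\<bar> \<le> C"
  shows "infnorm x \<le> C"
  unfolding infnorm_cart using assms by (intro cSup_least) auto

theorem lemma3p16:
  fixes n m g l k :: nat and i j :: "int^'d"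
  assumes "n \<ge> 2" and "m \<ge> 2"
    and "g > 0" and "i \<le> j" and "1 \<le> k" and "k \<le> l div g"
  defines "p \<equiv> int m - 1"
  defines "Lf \<equiv> (\<lambda>x::int^'d. (Dfl n 0 ^^ g) x - cvec p)"
  defines "Rf \<equiv> (\<lambda>x::int^'d. (Dfl n 0 ^^ g) (x + cvec p))"
  defines "C \<equiv> real_of_int p * real n ^ g * (1 - real n powi (- (int k * int g))) / (real n ^ g - 1) + 1"
  shows "(Opow n m k (Bbox l i j) (- int g) allB = Bbox (l - g * k) ((Lf ^^ k) i) ((Rf ^^ k) j)) \<and>
      (\<forall>phi::nat \<times> (int^'d) \<in> allB. fst phi = l \<longrightarrow>
           Opow n m k {phi} (- int g) allB
             \<subseteq> {psi \<in> allB. fst psi = l - g * k \<and> infnorm (rho n phi psi) \<le> C}) \<and>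
      (C \<le> real_of_int p * real n ^ g / (real n ^ g - 1) + 1) \<and>
      (\<forall>phi::nat \<times> (int^'d) \<in> allB. fst phi = l \<longrightarrow>
           finite (Opow n m k {phi} (- int g) allB) \<and>
           real (card (Opow n m k {phi} (- int g) allB)) \<le> (2 * C + 1) ^ CARD('d))"
proof -
  define N where "N = int n ^ g"
  define Nr where "Nr = real n ^ g"
  define q where "q = 1 / Nr ^ k"
  define P where "P = real_of_int p"
  have n0: "n > 0" and m1: "m \<ge> 1" using assms by auto
  have p0: "0 \<le> p" using assms by (simp add: p_def)
  have P1: "P \<ge> 1" using assms by (simp add: P_def p_def)
  have NNr: "real_of_int N = Nr" by (simp add: N_def Nr_def)
  have "n ^ 1 \<le> n ^ g" using assms by (intro power_increasing) auto
  then have "(2::nat) \<le> n ^ g" using assms by simp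
  then have "real (2::nat) \<le> real (n ^ g)" by (simp only: of_nat_le_iff)
  then have Nr2: "Nr \<ge> 2" by (simp add: Nr_def)
  then have N1: "1 < N" using NNr by linarith
  have Nr1: "Nr > 1" using Nr2 by simp
  have q0: "0 < q" using Nr1 by (simp add: q_def)
  have q1: "q \<le> 1" using Nr1 by (simp add: q_def)
  have gkl: "g * k \<le> l"
  proof -
    have "g * k \<le> g * (l div g)" using assms by simp
    also have "\<dots> \<le> l" by (simp add: mult.commute)
    finally show ?thesis .
  qed
  have powi_eq: "real n powi (- (int k * int g)) = q"
  proof -
    have "real n powi (- (int k * int g)) = 1 / real n powi (int (g * k))"
      by (simp add: power_int_minus_divide mult.commute)
    also have "\<dots> = 1 / real n ^ (g * k)" by (simp only: power_int_of_nat)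
    also have "\<dots> = q" by (simp add: q_def Nr_def power_mult)
    finally show ?thesis .
  qed
  have Ceq: "C = P * Nr * (1 - q) / (Nr - 1) + 1"
    by (simp add: C_def powi_eq P_def Nr_def)
  have Lf_eq: "Lf = LV N p"
    by (rule ext) (simp add: Lf_def LV_def Dfl_pow[OF n0] N_def vec_eq_iff cvec_def)
  have Rf_eq: "Rf = RV N p"
    by (rule ext) (simp add: Rf_def RV_def Dfl_pow[OF n0] N_def vec_eq_iff cvec_def)
  have main: "\<And>lo hi. lo \<le> hi \<Longrightarrow> Opow n m k (Bbox l lo hi) (- int g) allB = Bbox (l - g * k) ((LV N p ^^ k) lo) ((RV N p ^^ k) hi)"
    using Opow_Bbox[OF n0 m1 _ gkl] unfolding N_def p_def by blast
  have part1: "Opow n m k (Bbox l i j) (- int g) allB = Bbox (l - g * k) ((Lf ^^ k) i) ((Rf ^^ k) j)"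
    using main[OF assms(4)] by (simp add: Lf_eq Rf_eq)
  define E where "E = P * Nr * (1 - q) / (Nr - 1) + 1 - q"
  define F where "F = P * (1 - q) / (Nr - 1)"
  have EC: "E \<le> C" using q0 by (simp add: E_def Ceq)
  have F0: "0 \<le> F" using P1 q1 Nr1 by (simp add: F_def)
  have FC: "F + 1 \<le> C"
  proof -
    have "F = 1 * F" by simp
    also have "\<dots> \<le> Nr * F" using F0 Nr1 by (intro mult_right_mono) auto
    also have "Nr * F = P * Nr * (1 - q) / (Nr - 1)" by (simp add: F_def)
    finally show ?thesis by (simp add: Ceq)
  qed
  have C0: "0 \<le> C" using F0 FC by simp
  have comp: "\<And>(a::int^'d) t. real_of_int (a $ t) / Nr ^ k - real_of_int ((LV N p ^^ k) a $ t) \<le> E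
      \<and> real_of_int ((RV N p ^^ k) a $ t) - real_of_int (a $ t) / Nr ^ k \<le> F"
  proof
    fix a :: "int^'d" and t
    show "real_of_int (a $ t) / Nr ^ k - real_of_int ((LV N p ^^ k) a $ t) \<le> E"
      using L_lower[OF N1, where p=p and k=k and a="a $ t"] by (simp add: LV_pow_comp E_def NNr q_def P_def)
    show "real_of_int ((RV N p ^^ k) a $ t) - real_of_int (a $ t) / Nr ^ k \<le> F"
      using R_upper[OF N1, where p=p and k=k and a="a $ t"] by (simp add: RV_pow_comp F_def NNr q_def P_def)
  qed
  have single: "\<And>phi::nat \<times> (int^'d). fst phi = l \<Longrightarrow> Opow n m k {phi} (- int g) allB
     = Bbox (l - g * k) ((LV N p ^^ k) (snd phi)) ((RV N p ^^ k) (snd phi))"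
  proof -
    fix phi :: "nat \<times> (int^'d)" assume "fst phi = l"
    then have "{phi} = Bbox l (snd phi) (snd phi)"
      by (cases phi) (auto simp: Bbox_def box_def)
    then show "Opow n m k {phi} (- int g) allB = Bbox (l - g * k) ((LV N p ^^ k) (snd phi)) ((RV N p ^^ k) (snd phi))"
      using main[of "snd phi" "snd phi"] by simp
  qed
  have part2: "\<forall>phi::nat \<times> (int^'d) \<in> allB. fst phi = l \<longrightarrow>
           Opow n m k {phi} (- int g) allB
             \<subseteq> {psi \<in> allB. fst psi = l - g * k \<and> infnorm (rho n phi psi) \<le> C}"
  proof (intro ballI impI subsetI)
    fix phi :: "nat \<times> (int^'d)" and psi assume ph: "fst phi = l" and psi: "psi \<in> Opow n m k {phi} (- int g) allB"
    obtain a where phi: "phi = (l, a)" using ph by (cases phi) auto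
    obtain b where psi_eq: "psi = (l - g * k, b)" and bb: "\<forall>t. (LV N p ^^ k) a $ t \<le> b $ t \<and> b $ t \<le> (RV N p ^^ k) a $ t"
      using psi single[OF ph] by (cases psi) (auto simp: phi Bbox_mem)
    have ex: "int l - int (l - g * k) = int k * int g" using gkl by simp
    have "\<And>t. \<bar>rho n phi psi $ t\<bar> \<le> C"
    proof -
      fix t
      have r: "rho n phi psi $ t = real_of_int (a $ t) / Nr ^ k - real_of_int (b $ t)"
        using powi_eq by (simp add: rho_def phi psi_eq ex q_def)
      have "real_of_int ((LV N p ^^ k) a $ t) \<le> real_of_int (b $ t)" "real_of_int (b $ t) \<le> real_of_int ((RV N p ^^ k) a $ t)"
        using bb by auto
      then show "\<bar>rho n phi psi $ t\<bar> \<le> C" unfolding r using comp[of a t] EC FC F0 by linarith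
    qed
    then have "infnorm (rho n phi psi) \<le> C" by (rule infnorm_le_cart)
    then show "psi \<in> {psi \<in> allB. fst psi = l - g * k \<and> infnorm (rho n phi psi) \<le> C}"
      by (simp add: allB_def psi_eq)
  qed
  have part3: "C \<le> real_of_int p * real n ^ g / (real n ^ g - 1) + 1"
  proof -
    have "P * Nr * (1 - q) \<le> P * Nr" using P1 Nr1 q0 by (simp add: mult_left_mono)
    then have "P * Nr * (1 - q) / (Nr - 1) \<le> P * Nr / (Nr - 1)" using Nr1 by (intro divide_right_mono) auto
    then show ?thesis by (simp add: Ceq P_def Nr_def)
  qed
  have part4: "\<forall>phi::nat \<times> (int^'d) \<in> allB. fst phi = l \<longrightarrow>
           finite (Opow n m k {phi} (- int g) allB) \<and>
           real (card (Opow n m k {phi} (- int g) allB)) \<le> (2 * C + 1) ^ CARD('d)"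
  proof (intro ballI impI conjI)
    fix phi :: "nat \<times> (int^'d)" assume ph: "fst phi = l"
    let ?a = "snd phi"
    have cb: "finite (Opow n m k {phi} (- int g) allB) \<and> card (Opow n m k {phi} (- int g) allB)
       = (\<Prod>t\<in>UNIV. nat ((RV N p ^^ k) ?a $ t - (LV N p ^^ k) ?a $ t + 1))"
      unfolding single[OF ph] by (rule card_Bbox)
    then show "finite (Opow n m k {phi} (- int g) allB)" by simp
    have "real (card (Opow n m k {phi} (- int g) allB)) = (\<Prod>t\<in>UNIV. real (nat ((RV N p ^^ k) ?a $ t - (LV N p ^^ k) ?a $ t + 1)))"
      using cb by simp
    also have "\<dots> \<le> (\<Prod>t\<in>(UNIV::'d set). 2 * C + 1)"
    proof (rule prod_mono)
      fix t :: 'd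
      have "real_of_int ((RV N p ^^ k) ?a $ t - (LV N p ^^ k) ?a $ t + 1) \<le> 2 * C + 1"
        using comp[of ?a t] EC FC by simp
      then show "0 \<le> real (nat ((RV N p ^^ k) ?a $ t - (LV N p ^^ k) ?a $ t + 1)) \<and>
          real (nat ((RV N p ^^ k) ?a $ t - (LV N p ^^ k) ?a $ t + 1)) \<le> 2 * C + 1"
        using C0 by (cases "0 \<le> (RV N p ^^ k) ?a $ t - (LV N p ^^ k) ?a $ t + 1") auto
    qed
    also have "\<dots> = (2 * C + 1) ^ CARD('d)" by simp
    finally show "real (card (Opow n m k {phi} (- int g) allB)) \<le> (2 * C + 1) ^ CARD('d)" .
  qed
  show ?thesis using part1 part2 part3 part4 by blast
qed

end
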